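(* Let $p_1=2<p_2=3<p_3=5<\cdots$ denote the primes in increasing order, and fix an integer $K\ge 1$. Starting from the set $M=\{4,5,6,\dots\}$ of integers $\ge 4$, remove every integer of the form $2np_k$ or $np_k-1$ with $n\ge 2$ an integer and $1\le k\le K$. Then an integer $m$ with $4\le m<p_{K+1}^2-2$ remains after this removal if and only if $m=2q$ for a Sophie Germain prime $q$, i.e. $m=2q$ where both $q$ and $2q+1$ are prime.
   Context: A prime $q$ is a Sophie Germain prime if $2q+1$ is also prime (then $2q+1$ is called a safe prime). *)

theory Defs
  imports Main "HOL-Computational_Algebra.Primes"
begin

text \<open>The k-th prime (1-indexed): the unique prime with exactly k-1 primes below it,
  so pr 1 = 2, pr 2 = 3, pr 3 = 5, ...\<close>
definition pr :: "nat \<Rightarrow> nat" where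
  "pr k = (THE p. prime p \<and> card {q. prime q \<and> q < p} = k - 1)"

definition removed :: "nat \<Rightarrow> int \<Rightarrow> bool" where
  "removed K m \<longleftrightarrow> (\<exists>n::int. \<exists>k::nat. n \<ge> 2 \<and> 1 \<le> k \<and> k \<le> K \<and>
      (m = 2 * n * int (pr k) \<or> m = n * int (pr k) - 1))"

definition remains :: "nat \<Rightarrow> int \<Rightarrow> bool" where
  "remains K m \<longleftrightarrow> m \<ge> 4 \<and> \<not> removed K m"

end

theory Submission
  imports Defs
begin

lemma card_primes_less_mono:
  fixes p p' :: nat
  assumes "prime p" "p < p'"
  shows "card {q. prime q \<and> q < p} < card {q. prime q \<and> q < p'}"
proof (rule psubset_card_mono)
  show "finite {q. prime q \<and> q < p'}" by simp
  show "{q. prime q \<and> q < p} \<subset> {q. prime q \<and> q < p'}"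
    using assms by auto
qed

lemma card_primes_inj:
  fixes p p' :: nat
  assumes "prime p" "prime p'" "card {q. prime q \<and> q < p} = card {q. prime q \<and> q < p'}"
  shows "p = p'"
proof (rule ccontr)
  assume "p \<noteq> p'"
  then consider "p < p'" | "p' < p" by linarith
  then show False
    using assms card_primes_less_mono[of p p'] card_primes_less_mono[of p' p] by cases auto
qed

lemma card_primes_ex: "\<exists>p::nat. prime p \<and> card {q. prime q \<and> q < p} = k"
proof (induction k)
  case 0
  have "{q::nat. prime q \<and> q < 2} = {}"
  proof (intro equalityI subsetI)
    fix x :: nat assume "x \<in> {q. prime q \<and> q < 2}"
    then have "prime x" "x < 2" by auto
    then show "x \<in> {}" using prime_ge_2_nat[of x] by linarith
  qed simp
  then show ?case using two_is_prime_nat by (intro exI[of _ 2]) simp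
next
  case (Suc k)
  then obtain p :: nat where p: "prime p" "card {q. prime q \<and> q < p} = k" by blast
  define p' where "p' = (LEAST r::nat. prime r \<and> p < r)"
  obtain r :: nat where r: "prime r \<and> p < r"
    using bigger_prime[of p] by blast
  have p': "prime p' \<and> p < p'" unfolding p'_def using r by (rule LeastI)
  have le: "\<And>r. prime r \<and> p < r \<Longrightarrow> p' \<le> r" unfolding p'_def by (rule Least_le)
  have "{q. prime q \<and> q < p'} = insert p {q. prime q \<and> q < p}"
  proof (intro set_eqI iffI)
    fix x assume x: "x \<in> {q. prime q \<and> q < p'}"
    show "x \<in> insert p {q. prime q \<and> q < p}"
    proof (cases "p < x")
      case True
      then have "p' \<le> x" using le x by simp
      then show ?thesis using x by simp
    next
      case False
      then show ?thesis using x by auto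
    qed
  next
    fix x assume x: "x \<in> insert p {q. prime q \<and> q < p}"
    then show "x \<in> {q. prime q \<and> q < p'}" using p p' by auto
  qed
  then have "card {q. prime q \<and> q < p'} = Suc k" using p by simp
  then show ?case using p' by blast
qed

lemma pr_spec:
  assumes "k \<ge> 1"
  shows "prime (pr k) \<and> card {q. prime q \<and> q < pr k} = k - 1"
proof -
  obtain p :: nat where p: "prime p" "card {q. prime q \<and> q < p} = k - 1"
    using card_primes_ex by blast
  show ?thesis unfolding pr_def
  proof (rule theI[of _ p])
    show "prime p \<and> card {q. prime q \<and> q < p} = k - 1" using p by simp
  next
    fix x :: nat assume "prime x \<and> card {q. prime q \<and> q < x} = k - 1"
    then show "x = p" using p card_primes_inj[of x p] by simp
  qed
qed

lemma pr_eq: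
  assumes "prime p" "card {q. prime q \<and> q < p} = k - 1" "k \<ge> 1"
  shows "pr k = p"
  using pr_spec[OF assms(3)] assms card_primes_inj[of "pr k" p] by simp

lemma pr_1: "pr 1 = 2"
proof -
  have "{q::nat. prime q \<and> q < 2} = {}"
  proof (intro equalityI subsetI)
    fix x :: nat assume "x \<in> {q. prime q \<and> q < 2}"
    then have "prime x" "x < 2" by auto
    then show "x \<in> {}" using prime_ge_2_nat[of x] by linarith
  qed simp
  then show ?thesis by (intro pr_eq) auto
qed

lemma small_prime:
  assumes "prime p" "p < pr (K + 1)"
  shows "\<exists>k. 1 \<le> k \<and> k \<le> K \<and> pr k = p"
proof -
  define k where "k = card {q. prime q \<and> q < p} + 1"
  have "card {q. prime q \<and> q < p} < card {q. prime q \<and> q < pr (K+1)}"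
    using card_primes_less_mono assms by blast
  also have "\<dots> = K" using pr_spec[of "K+1"] by simp
  finally have "k \<le> K" unfolding k_def by simp
  moreover have "pr k = p" using assms(1) by (intro pr_eq) (auto simp: k_def)
  ultimately show ?thesis unfolding k_def by auto
qed

lemma comp:
  fixes y :: nat
  assumes "y \<ge> 2" "\<not> prime y"
  shows "\<exists>p n. prime p \<and> y = n * p \<and> n \<ge> 2 \<and> p * p \<le> y"
proof -
  obtain a where a: "a dvd y" "a \<noteq> 1" "a \<noteq> y"
    using assms prime_nat_iff by auto
  obtain b where b: "y = a * b" using a by blast
  have "a \<noteq> 0" using b assms by auto
  then have a2: "a \<ge> 2" using a(2) by linarith
  have "b \<noteq> 0" using b assms by auto
  moreover have "b \<noteq> 1" using b a(3) by auto
  ultimately have b2: "b \<ge> 2" by linarith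
  define d where "d = min a b"
  define e where "e = max a b"
  have de1: "y = d * e" using b by (auto simp: d_def e_def min_def max_def)
  have de2: "d \<le> e" "d \<ge> 2" using a2 b2 by (auto simp: d_def e_def)
  have "d \<noteq> 1" using de2 by linarith
  then obtain p where p: "prime p" "p dvd d" using prime_factor_nat[of d] by blast
  obtain c where c: "d = p * c" using p by blast
  have "p \<le> d" using p(2) de2 dvd_imp_le by simp
  have "c \<noteq> 0" using c de2 by (cases c) auto
  have ye: "y = (c * e) * p" using de1 c by simp
  have "e \<le> c * e" using \<open>c \<noteq> 0\<close> by simp
  then have ce: "c * e \<ge> 2" using de2 by linarith
  have "p * p \<le> d * e" using \<open>p \<le> d\<close> de2 by (intro mult_le_mono) simp_all
  then have "p * p \<le> y" using de1 by simp
  then show ?thesis using p ye ce by blast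
qed

lemma comp_int:
  fixes x :: int and P :: nat
  assumes "x \<ge> 2" "\<not> prime x" "x < int P ^ 2"
  shows "\<exists>p n. prime p \<and> p < P \<and> x = n * int p \<and> n \<ge> 2"
proof -
  define y where "y = nat x"
  have xy: "x = int y" using assms y_def by simp
  have "\<not> prime y" using assms(2) xy by simp
  then obtain p n where pn: "prime p" "y = n * p" "n \<ge> 2" "p * p \<le> y"
    using comp[of y] assms xy by auto
  have "int y < int P * int P" using assms(3) xy by (simp add: power2_eq_square)
  then have "int y < int (P * P)" by simp
  then have "y < P * P" by (simp only: of_nat_less_iff)
  then have "p * p < P * P" using pn(4) by linarith
  have "p < P"
  proof (rule ccontr)
    assume "\<not> p < P"
    then have "P \<le> p" by simp
    then have "P * P \<le> p * p" by (intro mult_le_mono)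
    then show False using \<open>p * p < P * P\<close> by simp
  qed
  then show ?thesis using pn xy by (intro exI[of _ p] exI[of _ "int n"]) auto
qed

theorem mainTheorem2:
  fixes K :: nat and m :: int
  assumes "K \<ge> 1"
    and "4 \<le> m" and "m < int (pr (K + 1))^2 - 2"
  shows "remains K m \<longleftrightarrow> (\<exists>q::int. m = 2 * q \<and> prime q \<and> prime (2 * q + 1))"
proof
  assume R: "remains K m"
  then have nr: "\<not> removed K m" by (simp add: remains_def)
  show "\<exists>q::int. m = 2 * q \<and> prime q \<and> prime (2 * q + 1)"
  proof (cases "even m")
    case False
    then obtain n where n: "m + 1 = 2 * n" by (metis even_plus_one_iff evenE)
    have "n \<ge> 2" using n assms by simp
    then have "removed K m" unfolding removed_def using assms(1) n pr_1
      by (intro exI[of _ n] exI[of _ 1]) auto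
    then show ?thesis using nr by simp
  next
    case True
    then obtain q where q: "m = 2 * q" by blast
    have "prime q"
    proof (rule ccontr)
      assume "\<not> prime q"
      moreover have "q < int (pr (K+1))^2" using q assms by simp
      moreover have "q \<ge> 2" using q assms by simp
      ultimately have "\<exists>p n. prime p \<and> p < pr (K+1) \<and> q = n * int p \<and> n \<ge> 2"
        by (intro comp_int)
      then obtain p n where pn: "prime p" "p < pr (K+1)" "q = n * int p" "n \<ge> 2"
        by blast
      obtain k where k: "1 \<le> k" "k \<le> K" "pr k = p" using small_prime pn by blast
      have "removed K m" unfolding removed_def using pn k q
        by (intro exI[of _ n] exI[of _ k]) auto
      then show False using nr by simp
    qed
    moreover have "prime (2 * q + 1)"
    proof (rule ccontr)
      assume "\<not> prime (2 * q + 1)"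
      moreover have "2 * q + 1 < int (pr (K+1))^2" using q assms by simp
      moreover have "2 * q + 1 \<ge> 2" using q assms by simp
      ultimately have "\<exists>p n. prime p \<and> p < pr (K+1) \<and> 2 * q + 1 = n * int p \<and> n \<ge> 2"
        by (intro comp_int)
      then obtain p n where pn: "prime p" "p < pr (K+1)" "2 * q + 1 = n * int p" "n \<ge> 2"
        by blast
      obtain k where k: "1 \<le> k" "k \<le> K" "pr k = p" using small_prime pn by blast
      have "removed K m" unfolding removed_def using pn k q
        by (intro exI[of _ n] exI[of _ k]) auto
      then show False using nr by simp
    qed
    ultimately show ?thesis using q by blast
  qed
next
  assume "\<exists>q::int. m = 2 * q \<and> prime q \<and> prime (2 * q + 1)"
  then obtain q where q: "m = 2 * q" "prime q" "prime (2 * q + 1)" by blast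
  have key: "\<And>r n k. prime (r::int) \<Longrightarrow> r = n * int (pr k) \<Longrightarrow> n \<ge> 2 \<Longrightarrow> 1 \<le> k \<Longrightarrow> False"
  proof -
    fix r n :: int and k :: nat
    assume h: "prime r" "r = n * int (pr k)" "n \<ge> 2" "1 \<le> k"
    have pk: "pr k \<ge> 2" using pr_spec[OF h(4)] prime_ge_2_nat by blast
    have "n dvd r" using h by simp
    have "\<forall>m. 0 \<le> m \<and> m dvd r \<longrightarrow> m = 1 \<or> m = r" using h(1) prime_int_iff by blast
    moreover have "0 \<le> n \<and> n dvd r" using \<open>n dvd r\<close> h(3) by simp
    ultimately have "n = 1 \<or> n = r" by blast
    then have "n = r" using h by simp
    then have "n * int (pr k) = n * 1" using h(2) by simp
    then have "int (pr k) = 1" using h(3) by simp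
    then show False using pk by simp
  qed
  have "\<not> removed K m"
  proof
    assume "removed K m"
    then obtain n k where nk: "n \<ge> 2" "1 \<le> k" "k \<le> K"
      "m = 2 * n * int (pr k) \<or> m = n * int (pr k) - 1"
      unfolding removed_def by blast
    from nk(4) show False
    proof
      assume "m = 2 * n * int (pr k)"
      then have "q = n * int (pr k)" using q by simp
      then show False using key q nk by blast
    next
      assume "m = n * int (pr k) - 1"
      then have "2 * q + 1 = n * int (pr k)" using q by simp
      then show False using key q nk by blast
    qed
  qed
  then show "remains K m" using assms by (simp add: remains_def)
qed

end
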